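(* Let $G\subseteq \mathrm{GL}_n(\mathbb{R})$ be a finite group with fundamental invariants $\pi_1,\dots,\pi_m$, so that $\mathbb{R}[X_1,\dots,X_n]^G=\mathbb{R}[\pi_1,\dots,\pi_m]$, and let $\Pi=(\pi_1,\dots,\pi_m):\mathbb{C}^n\to\mathbb{C}^m$ be the Hilbert map. Let $z\in V_{\mathbb{R}}(I_\Pi)$ be a point whose preimage $\Pi^{-1}(z)\subseteq\mathbb{C}^n$ is not contained in $\mathbb{R}^n$. Then there exists $f\in\left(\Sigma\mathbb{R}[\underline{X}]^2\right)^G$ such that $\phi_z(f)<0$.
   Context: $I_\Pi\subseteq\mathbb{R}[z_1,\dots,z_m]$ is the ideal of polynomial relations among $\pi_1,\dots,\pi_m$, and $V_{\mathbb{R}}(I_\Pi)\subseteq\mathbb{R}^m$ its real zero set. For $z\in V_{\mathbb{R}}(I_\Pi)$, $\phi_z:\mathbb{R}[\underline{X}]^G\to\mathbb{R}$ is the ring homomorphism $g(\pi_1,\dots,\pi_m)\mapsto g(z)$ (well defined since $z$ satisfies all relations). $\Sigma\mathbb{R}[\underline{X}]^2$ is the set of finite sums of squares of polynomials in $\mathbb{R}[\underline{X}]=\mathbb{R}[X_1,\dots,X_n]$, and $\left(\Sigma\mathbb{R}[\underline{X}]^2\right)^G=\Sigma\mathbb{R}[\underline{X}]^2\cap\mathbb{R}[\underline{X}]^G$. *)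

theory Defs
  imports "HOL-Analysis.Analysis" "HOL-Library.Poly_Mapping"
begin

type_synonym 'v rpoly = "('v \<Rightarrow>\<^sub>0 nat) \<Rightarrow>\<^sub>0 real"

definition Var :: "'v \<Rightarrow> 'v rpoly" where
  "Var i = Poly_Mapping.single (Poly_Mapping.single i 1) 1"

definition Const :: "real \<Rightarrow> 'v rpoly" where
  "Const c = Poly_Mapping.single 0 c"

text \<open>Used for evaluation at real points, at complex points, and for
  substitution of polynomials into polynomials.\<close>
definition peval :: "(real \<Rightarrow> 'b::comm_semiring_1) \<Rightarrow> ('v \<Rightarrow> 'b) \<Rightarrow> 'v rpoly \<Rightarrow> 'b" where
  "peval c x p = (\<Sum>\<alpha>\<in>Poly_Mapping.keys p. c (Poly_Mapping.lookup p \<alpha>) * (\<Prod>i\<in>Poly_Mapping.keys \<alpha>. x i ^ Poly_Mapping.lookup \<alpha> i))"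

definition eval_real :: "'v rpoly \<Rightarrow> ('v \<Rightarrow> real) \<Rightarrow> real" where
  "eval_real p x = peval id x p"

definition eval_complex :: "'v rpoly \<Rightarrow> ('v \<Rightarrow> complex) \<Rightarrow> complex" where
  "eval_complex p x = peval complex_of_real x p"

definition psubst :: "'v rpoly \<Rightarrow> ('v \<Rightarrow> 'w rpoly) \<Rightarrow> 'w rpoly" where
  "psubst p q = peval Const q p"

definition mat_act :: "real^'n^'n \<Rightarrow> 'n rpoly \<Rightarrow> 'n rpoly" where
  "mat_act g f = psubst f (\<lambda>i. \<Sum>j\<in>UNIV. Const (g $ i $ j) * Var j)"

definition invariants :: "(real^'n^'n) set \<Rightarrow> 'n rpoly set" where
  "invariants G = {f. \<forall>g\<in>G. mat_act g f = f}"

definition finite_matrix_group :: "(real^'n^'n) set \<Rightarrow> bool" where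
  "finite_matrix_group G \<longleftrightarrow> finite G \<and> mat 1 \<in> G \<and>
     (\<forall>g\<in>G. invertible g \<and> matrix_inv g \<in> G) \<and> (\<forall>g\<in>G. \<forall>h\<in>G. g ** h \<in> G)"

definition generates_invariants :: "(real^'n^'n) set \<Rightarrow> ('m \<Rightarrow> 'n rpoly) \<Rightarrow> bool" where
  "generates_invariants G \<pi> \<longleftrightarrow> invariants G = {psubst g \<pi> | g. True}"

definition sos :: "'v rpoly set" where
  "sos = {f. \<exists>qs. f = (\<Sum>q\<leftarrow>qs. q ^ 2)}"

definition relations_ideal :: "('m \<Rightarrow> 'n rpoly) \<Rightarrow> 'm rpoly set" where
  "relations_ideal \<pi> = {g. psubst g \<pi> = 0}"

definition real_zero_set :: "'m rpoly set \<Rightarrow> ('m \<Rightarrow> real) set" where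
  "real_zero_set I = {z. \<forall>g\<in>I. eval_real g z = 0}"

definition phi :: "('m \<Rightarrow> 'n rpoly) \<Rightarrow> ('m \<Rightarrow> real) \<Rightarrow> 'n rpoly \<Rightarrow> real" where
  "phi \<pi> z f = eval_real (SOME g. psubst g \<pi> = f) z"

definition hilbert_fibre :: "('m \<Rightarrow> 'n rpoly) \<Rightarrow> ('m \<Rightarrow> real) \<Rightarrow> ('n \<Rightarrow> complex) set" where
  "hilbert_fibre \<pi> z = {x. \<forall>k. eval_complex (\<pi> k) x = complex_of_real (z k)}"

end

theory Submission
  imports Defs
begin

definition mmono :: "('v \<Rightarrow> 'b::comm_semiring_1) \<Rightarrow> ('v \<Rightarrow>\<^sub>0 nat) \<Rightarrow> 'b" where
  "mmono x \<alpha> = (\<Prod>i\<in>Poly_Mapping.keys \<alpha>. x i ^ Poly_Mapping.lookup \<alpha> i)"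

lemma mono_superset:
  assumes "finite S" "Poly_Mapping.keys \<alpha> \<subseteq> S"
  shows "mmono x \<alpha> = (\<Prod>i\<in>S. x i ^ Poly_Mapping.lookup \<alpha> i)"
  unfolding mmono_def
  by (rule prod.mono_neutral_left[OF assms]) (auto simp: in_keys_iff)

lemma mono_add: "mmono x (\<alpha> + \<beta>) = mmono x \<alpha> * mmono x \<beta>"
proof -
  let ?S = "Poly_Mapping.keys \<alpha> \<union> Poly_Mapping.keys \<beta>"
  have "mmono x (\<alpha> + \<beta>) = (\<Prod>i\<in>?S. x i ^ Poly_Mapping.lookup (\<alpha>+\<beta>) i)"
    using keys_add[of \<alpha> \<beta>] by (intro mono_superset) auto
  also have "\<dots> = (\<Prod>i\<in>?S. x i ^ Poly_Mapping.lookup \<alpha> i) * (\<Prod>i\<in>?S. x i ^ Poly_Mapping.lookup \<beta> i)"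
    by (simp add: lookup_add power_add prod.distrib)
  also have "\<dots> = mmono x \<alpha> * mmono x \<beta>"
    by (simp add: mono_superset[of "?S"])
  finally show ?thesis .
qed

lemma mono_zero: "mmono x 0 = 1"
  by (simp add: mmono_def)

lemma peval_mono: "peval c x p = (\<Sum>\<alpha>\<in>Poly_Mapping.keys p. c (Poly_Mapping.lookup p \<alpha>) * mmono x \<alpha>)"
  by (simp add: peval_def mmono_def)

lemma peval_superset:
  assumes "finite S" "Poly_Mapping.keys p \<subseteq> S" "c 0 = 0"
  shows "peval c x p = (\<Sum>\<alpha>\<in>S. c (Poly_Mapping.lookup p \<alpha>) * mmono x \<alpha>)"
  unfolding peval_mono
  by (rule sum.mono_neutral_left[OF assms(1,2)]) (auto simp: in_keys_iff assms(3))

locale chom =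
  fixes c :: "real \<Rightarrow> 'b::comm_semiring_1"
  assumes c0: "c 0 = 0" and c1: "c 1 = 1" and cadd: "c (a + b) = c a + c b"
    and cmul: "c (a * b) = c a * c b"
begin

lemma peval_zero: "peval c x 0 = 0"
  by (simp add: peval_def)

lemma peval_add: "peval c x (p + q) = peval c x p + peval c x q"
proof -
  let ?S = "Poly_Mapping.keys p \<union> Poly_Mapping.keys q"
  have "peval c x (p + q) = (\<Sum>\<alpha>\<in>?S. c (Poly_Mapping.lookup (p+q) \<alpha>) * mmono x \<alpha>)"
    using keys_add[of p q] by (intro peval_superset) (auto simp: c0)
  also have "\<dots> = (\<Sum>\<alpha>\<in>?S. c (Poly_Mapping.lookup p \<alpha>) * mmono x \<alpha>) + (\<Sum>\<alpha>\<in>?S. c (Poly_Mapping.lookup q \<alpha>) * mmono x \<alpha>)"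
    by (simp add: lookup_add cadd distrib_right sum.distrib)
  also have "\<dots> = peval c x p + peval c x q"
    by (simp add: peval_superset[of "?S"] c0)
  finally show ?thesis .
qed

lemma peval_sum: "peval c x (\<Sum>i\<in>I. f i) = (\<Sum>i\<in>I. peval c x (f i))"
  by (induction I rule: infinite_finite_induct) (auto simp: peval_zero peval_add)

lemma peval_single: "peval c x (Poly_Mapping.single \<alpha> a) = c a * mmono x \<alpha>"
  by (simp add: peval_mono c0)

lemma monomials: "p = (\<Sum>\<alpha>\<in>Poly_Mapping.keys p. Poly_Mapping.single \<alpha> (Poly_Mapping.lookup p \<alpha>))"
  by (rule poly_mapping_eqI)
     (auto simp: lookup_sum lookup_single when_def in_keys_iff sum.delta' simp del: lookup_single_eq)

lemma peval_mult: "peval c x (p * q) = peval c x p * peval c x q"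
proof -
  let ?P = "Poly_Mapping.keys p" and ?Q = "Poly_Mapping.keys q"
  have "p * q = (\<Sum>\<alpha>\<in>?P. Poly_Mapping.single \<alpha> (Poly_Mapping.lookup p \<alpha>)) * (\<Sum>\<beta>\<in>?Q. Poly_Mapping.single \<beta> (Poly_Mapping.lookup q \<beta>))"
    using monomials[of p] monomials[of q] by simp
  also have "\<dots> = (\<Sum>\<alpha>\<in>?P. \<Sum>\<beta>\<in>?Q. Poly_Mapping.single (\<alpha>+\<beta>) (Poly_Mapping.lookup p \<alpha> * Poly_Mapping.lookup q \<beta>))"
    by (simp add: sum_product mult_single)
  finally have "peval c x (p*q) = (\<Sum>\<alpha>\<in>?P. \<Sum>\<beta>\<in>?Q. c (Poly_Mapping.lookup p \<alpha>) * mmono x \<alpha> * (c (Poly_Mapping.lookup q \<beta>) * mmono x \<beta>))"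
    by (simp add: peval_sum peval_single cmul mono_add mult_ac)
  also have "\<dots> = peval c x p * peval c x q"
    by (simp add: peval_mono sum_product)
  finally show ?thesis .
qed

lemma peval_one: "peval c x 1 = 1"
  by (simp add: peval_mono c1 mono_zero)

lemma peval_Const: "peval c x (Const a) = c a"
  by (simp add: Const_def peval_single mono_zero)

lemma peval_Var: "peval c x (Var i) = x i"
proof -
  have "mmono x (Poly_Mapping.single i 1) = x i"
    by (simp add: mmono_def)
  then show ?thesis by (simp add: Var_def peval_single c1)
qed

lemma peval_power: "peval c x (p ^ k) = peval c x p ^ k"
  by (induction k) (auto simp: peval_one peval_mult)

end

lemma chom_Const: "chom (Const :: real \<Rightarrow> 'v rpoly)"
  by unfold_locales (simp_all add: Const_def single_add mult_single)

lemma chom_id: "chom id" by unfold_locales auto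
lemma chom_cor: "chom complex_of_real" by unfold_locales auto

lemma hom_peval:
  fixes h :: "'b::comm_semiring_1 \<Rightarrow> 'c::comm_semiring_1"
  assumes h0: "h 0 = 0" and h1: "h 1 = 1" and ha: "\<And>a b. h (a + b) = h a + h b"
    and hm: "\<And>a b. h (a * b) = h a * h b"
  shows "h (peval c x p) = peval (h \<circ> c) (h \<circ> x) p"
proof -
  have hs: "h (\<Sum>i\<in>I. f i) = (\<Sum>i\<in>I. h (f i))" for I and f :: "_ \<Rightarrow> 'b"
    by (induction I rule: infinite_finite_induct) (auto simp: h0 ha)
  have hp: "h (\<Prod>i\<in>I. f i) = (\<Prod>i\<in>I. h (f i))" for I and f :: "_ \<Rightarrow> 'b"
    by (induction I rule: infinite_finite_induct) (auto simp: h1 hm)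
  have hpow: "h (a ^ k) = h a ^ k" for a k
    by (induction k) (auto simp: h1 hm)
  show ?thesis
    by (simp add: peval_def hs hp hpow hm)
qed

lemma Const_sum: "Const (\<Sum>i\<in>I. f i) = (\<Sum>i\<in>I. (Const (f i) :: 'v rpoly))"
  by (induction I rule: infinite_finite_induct) (auto simp: single_add Const_def)

lemma evc_psubst: "eval_complex (psubst p q) y = peval complex_of_real (\<lambda>i. eval_complex (q i) y) p"
proof -
  interpret chom complex_of_real by (rule chom_cor)
  have "peval complex_of_real y (peval Const q p) =
     peval (peval complex_of_real y \<circ> Const) (peval complex_of_real y \<circ> q) p"
    by (rule hom_peval) (simp_all add: peval_zero peval_one peval_add peval_mult)
  moreover have "peval complex_of_real y \<circ> Const = complex_of_real"
    by (auto simp: peval_Const)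
  ultimately show ?thesis
    by (simp add: eval_complex_def psubst_def o_def)
qed

lemma psubst_psubst: "psubst (psubst p q) r = psubst p (\<lambda>i. psubst (q i) r)"
proof -
  interpret chom "Const :: real \<Rightarrow> 'w rpoly" by (rule chom_Const)
  have "peval Const r (peval Const q p) =
     peval (peval Const r \<circ> Const) (peval Const r \<circ> q) p"
    by (rule hom_peval) (simp_all add: peval_zero peval_one peval_add peval_mult)
  moreover have "peval Const r \<circ> Const = Const"
    by (auto simp: peval_Const)
  ultimately show ?thesis
    by (simp add: psubst_def o_def)
qed

lemma cor_peval: "complex_of_real (eval_real g z) = peval complex_of_real (\<lambda>k. complex_of_real (z k)) g"
  unfolding eval_real_def
  by (subst hom_peval[of complex_of_real]) (simp_all add: o_def)

lemma cnj_evc: "cnj (eval_complex p y) = eval_complex p (\<lambda>i. cnj (y i))"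
  unfolding eval_complex_def
  by (subst hom_peval[of cnj]) (simp_all add: o_def)

definition act :: "real^'n^'n \<Rightarrow> ('n \<Rightarrow> complex) \<Rightarrow> ('n \<Rightarrow> complex)" where
  "act g y = (\<lambda>i. \<Sum>j\<in>UNIV. complex_of_real (g $ i $ j) * y j)"

lemma evc_mat_act: "eval_complex (mat_act g p) y = eval_complex p (act g y)"
proof -
  interpret chom complex_of_real by (rule chom_cor)
  show ?thesis
    unfolding mat_act_def evc_psubst act_def
    by (simp add: eval_complex_def peval_sum peval_mult peval_Const peval_Var)
qed

lemma mat_act_mat_act:
  fixes g h :: "real^'n^'n" and p :: "'n rpoly"
  shows "mat_act h (mat_act g p) = mat_act (g ** h) p"
proof -
  interpret chom "Const :: real \<Rightarrow> 'n rpoly" by (rule chom_Const)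
  have "psubst (\<Sum>j\<in>UNIV. Const (g $ i $ j) * Var j) (\<lambda>i. \<Sum>j\<in>UNIV. Const (h $ i $ j) * Var j)
        = (\<Sum>k\<in>UNIV. Const ((g ** h) $ i $ k) * (Var k :: 'n rpoly))" for i
  proof -
    have "psubst (\<Sum>j\<in>UNIV. Const (g $ i $ j) * Var j) (\<lambda>i. \<Sum>j\<in>UNIV. Const (h $ i $ j) * Var j)
        = (\<Sum>j\<in>UNIV. Const (g $ i $ j) * (\<Sum>k\<in>UNIV. Const (h $ j $ k) * (Var k :: 'n rpoly)))"
      by (simp add: psubst_def peval_sum peval_mult peval_Const peval_Var)
    also have "\<dots> = (\<Sum>j\<in>UNIV. \<Sum>k\<in>UNIV. Const (g $ i $ j * h $ j $ k) * (Var k :: 'n rpoly))"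
      by (simp add: sum_distrib_left cmul mult.assoc)
    also have "\<dots> = (\<Sum>k\<in>UNIV. \<Sum>j\<in>UNIV. Const (g $ i $ j * h $ j $ k) * (Var k :: 'n rpoly))"
      by (rule sum.swap)
    also have "\<dots> = (\<Sum>k\<in>UNIV. Const ((g ** h) $ i $ k) * (Var k :: 'n rpoly))"
      by (simp add: matrix_matrix_mult_def Const_sum sum_distrib_right)
    finally show ?thesis .
  qed
  then show ?thesis
    unfolding mat_act_def psubst_psubst by simp
qed

definition rep :: "(('n \<Rightarrow> complex) \<Rightarrow> complex) \<Rightarrow> bool" where
  "rep F \<longleftrightarrow> (\<exists>P Q :: 'n rpoly. \<forall>y. F y = eval_complex P y + \<i> * eval_complex Q y)"

lemma rep_const: "rep (\<lambda>y. c)"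
proof -
  interpret chom complex_of_real by (rule chom_cor)
  show ?thesis unfolding rep_def
    by (rule exI[of _ "Const (Re c)"], rule exI[of _ "Const (Im c)"])
       (simp add: eval_complex_def peval_Const complex_eq_iff)
qed

lemma rep_var: "rep (\<lambda>y. y j)"
proof -
  interpret chom complex_of_real by (rule chom_cor)
  show ?thesis unfolding rep_def
    by (rule exI[of _ "Var j"], rule exI[of _ 0])
       (simp add: eval_complex_def peval_Var peval_zero)
qed

lemma evc_ring:
  "eval_complex (p + q) y = eval_complex p y + eval_complex q y"
  "eval_complex (p * q) y = eval_complex p y * eval_complex q y"
  "eval_complex (p - q) y = eval_complex p y - eval_complex q y"
  "eval_complex (0::'n rpoly) y = 0"
  "eval_complex (1::'n rpoly) y = 1"
proof -
  interpret chom complex_of_real by (rule chom_cor)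
  show 1: "eval_complex (p + q) y = eval_complex p y + eval_complex q y"
    "eval_complex (p * q) y = eval_complex p y * eval_complex q y"
    "eval_complex (0::'n rpoly) y = 0" "eval_complex (1::'n rpoly) y = 1"
    by (simp_all add: eval_complex_def peval_add peval_mult peval_zero peval_one)
  have "eval_complex (p - q + q) y = eval_complex (p - q) y + eval_complex q y"
    by (simp only: eval_complex_def peval_add)
  then have "eval_complex (p - q) y + eval_complex q y = eval_complex p y"
    by simp
  then show "eval_complex (p - q) y = eval_complex p y - eval_complex q y"
    by (simp add: algebra_simps)
qed

lemma rep_add: assumes "rep F" "rep G" shows "rep (\<lambda>y. F y + G y)"
proof -
  obtain P1 Q1 where 1: "\<And>y. F y = eval_complex P1 y + \<i> * eval_complex Q1 y" using assms(1) unfolding rep_def by blast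
  obtain P2 Q2 where 2: "\<And>y. G y = eval_complex P2 y + \<i> * eval_complex Q2 y" using assms(2) unfolding rep_def by blast
  show ?thesis unfolding rep_def by (rule exI[of _ "P1 + P2"], rule exI[of _ "Q1 + Q2"]) (simp add: 1 2 evc_ring algebra_simps)
qed

lemma rep_mult: assumes "rep F" "rep G" shows "rep (\<lambda>y. F y * G y)"
proof -
  obtain P1 Q1 where 1: "\<And>y. F y = eval_complex P1 y + \<i> * eval_complex Q1 y" using assms(1) unfolding rep_def by blast
  obtain P2 Q2 where 2: "\<And>y. G y = eval_complex P2 y + \<i> * eval_complex Q2 y" using assms(2) unfolding rep_def by blast
  show ?thesis unfolding rep_def by (rule exI[of _ "P1 * P2 - Q1 * Q2"], rule exI[of _ "P1 * Q2 + Q1 * P2"])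
       (simp add: 1 2 evc_ring algebra_simps)
qed

lemma rep_sum: "(\<And>i. i \<in> I \<Longrightarrow> rep (F i)) \<Longrightarrow> rep (\<lambda>y. \<Sum>i\<in>I. F i y)"
  by (induction I rule: infinite_finite_induct) (auto simp: rep_const intro: rep_add)

lemma rep_prod: "(\<And>i. i \<in> I \<Longrightarrow> rep (F i)) \<Longrightarrow> rep (\<lambda>y. \<Prod>i\<in>I. F i y)"
  by (induction I rule: infinite_finite_induct) (auto simp: rep_const intro: rep_mult)

lemma rep_lin: "rep (\<lambda>y. (y j - a) / b)"
proof -
  have "rep (\<lambda>y. (y j + (- a)) * (1 / b))"
    by (rule rep_mult[OF rep_add[OF rep_var rep_const] rep_const])
  then show ?thesis by (simp add: divide_inverse)
qed

lemma interp:
  fixes Om :: "('n \<Rightarrow> complex) set" and t :: "('n \<Rightarrow> complex) \<Rightarrow> complex"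
  assumes fin: "finite Om" and cl: "\<And>y. y \<in> Om \<Longrightarrow> (\<lambda>i. cnj (y i)) \<in> Om"
    and tc: "\<And>y. y \<in> Om \<Longrightarrow> t (\<lambda>i. cnj (y i)) = cnj (t y)"
  shows "\<exists>P :: 'n rpoly. \<forall>y\<in>Om. eval_complex P y = t y"
proof -
  define jj where "jj v w = (SOME j. v j \<noteq> w j)" for v w :: "'n \<Rightarrow> complex"
  have jj: "v (jj v w) \<noteq> w (jj v w)" if "v \<noteq> w" for v w
  proof -
    from that obtain j where "v j \<noteq> w j" by auto
    then show ?thesis unfolding jj_def by (rule someI)
  qed
  define L where "L w y = (\<Prod>v\<in>Om - {w}. (y (jj v w) - v (jj v w)) / (w (jj v w) - v (jj v w)))" for w y
  define F where "F y = (\<Sum>w\<in>Om. t w * L w y)" for y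
  have "rep F"
    unfolding F_def L_def
    by (rule rep_sum, rule rep_mult[OF rep_const], rule rep_prod, rule rep_lin)
  then obtain P Q :: "'n rpoly" where PQ: "\<And>y. F y = eval_complex P y + \<i> * eval_complex Q y"
    unfolding rep_def by blast
  have Lself: "L w w = 1" if "w \<in> Om" for w
  proof -
    have "(w (jj v w) - v (jj v w)) / (w (jj v w) - v (jj v w)) = 1" if "v \<in> Om - {w}" for v
      using jj[of v w] that by simp
    then show ?thesis unfolding L_def by (intro prod.neutral) blast
  qed
  have Lother: "L w v = 0" if "w \<in> Om" "v \<in> Om" "v \<noteq> w" for v w
    unfolding L_def
    by (rule prod_zero) (use that fin in \<open>auto intro!: bexI[of _ v]\<close>)
  have Fval: "F w = t w" if "w \<in> Om" for w
  proof -
    have "F w = t w * L w w + (\<Sum>v\<in>Om - {w}. t v * L v w)"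
      unfolding F_def using that fin by (simp add: sum.remove)
    also have "(\<Sum>v\<in>Om - {w}. t v * L v w) = 0"
      using that by (intro sum.neutral) (auto simp: Lother)
    finally show ?thesis using Lself[OF that] by simp
  qed
  show ?thesis
  proof (intro exI ballI)
    fix y assume y: "y \<in> Om"
    have e1: "t y = eval_complex P y + \<i> * eval_complex Q y"
      using PQ Fval[OF y] by simp
    have "t (\<lambda>i. cnj (y i)) = eval_complex P (\<lambda>i. cnj (y i)) + \<i> * eval_complex Q (\<lambda>i. cnj (y i))"
      using PQ Fval[OF cl[OF y]] by simp
    then have "cnj (t y) = cnj (eval_complex P y) + \<i> * cnj (eval_complex Q y)"
      using tc[OF y] by (simp add: cnj_evc)
    then have "cnj (cnj (t y)) = cnj (cnj (eval_complex P y) + \<i> * cnj (eval_complex Q y))"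
      by (rule arg_cong)
    then have e2: "t y = eval_complex P y - \<i> * eval_complex Q y"
      by simp
    from e1 e2 show "eval_complex P y = t y" by simp
  qed
qed

lemma minv:
  fixes A :: "real^'n^'n"
  assumes "invertible A"
  shows "A ** matrix_inv A = mat 1" "matrix_inv A ** A = mat 1"
proof -
  from assms obtain A' :: "real^'n^'n" where "A ** A' = mat 1 \<and> A' ** A = mat 1"
    unfolding invertible_def by blast
  then have "A ** matrix_inv A = mat 1 \<and> matrix_inv A ** A = mat 1"
    unfolding matrix_inv_def by (rule someI)
  then show "A ** matrix_inv A = mat 1" "matrix_inv A ** A = mat 1" by auto
qed

lemma act_comp: "act h (act g y) = act (h ** g) y"
proof
  fix i
  have "act h (act g y) i = (\<Sum>j\<in>UNIV. \<Sum>k\<in>UNIV. complex_of_real (h $ i $ j * g $ j $ k) * y k)"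
    by (simp add: act_def sum_distrib_left mult.assoc)
  also have "\<dots> = (\<Sum>k\<in>UNIV. \<Sum>j\<in>UNIV. complex_of_real (h $ i $ j * g $ j $ k) * y k)"
    by (rule sum.swap)
  also have "\<dots> = act (h ** g) y i"
    by (simp add: act_def matrix_matrix_mult_def sum_distrib_right)
  finally show "act h (act g y) i = act (h ** g) y i" .
qed

lemma act_id: "act (mat 1) y = y"
proof
  fix i
  have "act (mat 1) y i = (\<Sum>j\<in>UNIV. if i = j then y j else 0)"
    unfolding act_def mat_def by (intro sum.cong) auto
  then show "act (mat 1) y i = y i" by simp
qed

lemma act_real: "(\<forall>i. Im (y i) = 0) \<Longrightarrow> Im (act g y i) = 0"
  by (simp add: act_def Im_sum)

lemma act_cnj: "(\<lambda>i. cnj (act g y i)) = act g (\<lambda>i. cnj (y i))"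
  by (simp add: act_def fun_eq_iff)

lemma act_nonreal:
  fixes g :: "real^'n^'n"
  assumes "invertible g" "\<exists>i. Im (y i) \<noteq> 0"
  shows "\<exists>i. Im (act g y i) \<noteq> 0"
proof (rule ccontr)
  assume "\<not> ?thesis"
  then have "\<forall>i. Im (act (matrix_inv g) (act g y) i) = 0"
    by (auto intro: act_real)
  then show False
    using assms by (simp add: act_comp minv act_id)
qed

lemma mat_act_hom:
  "mat_act h (\<Sum>g\<in>G. (F g) ^ 2) = (\<Sum>g\<in>G. (mat_act h (F g)) ^ 2)"
proof -
  interpret chom "Const :: real \<Rightarrow> 'n rpoly" by (rule chom_Const)
  show ?thesis by (simp add: mat_act_def psubst_def peval_sum peval_power)
qed

lemma evc_sumsq:
  "eval_complex (\<Sum>g\<in>G. (F g) ^ 2) y = (\<Sum>g\<in>G. (eval_complex (F g) y) ^ 2)"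
proof -
  interpret chom complex_of_real by (rule chom_cor)
  show ?thesis by (simp add: eval_complex_def peval_sum peval_power)
qed

theorem proposition2p4:
  fixes G :: "(real^'n^'n) set" and \<pi> :: "'m::finite \<Rightarrow> 'n rpoly" and z :: "'m \<Rightarrow> real"
  assumes "finite_matrix_group G"
    and "generates_invariants G \<pi>"
    and "z \<in> real_zero_set (relations_ideal \<pi>)"
    and "\<not> hilbert_fibre \<pi> z \<subseteq> {x. \<forall>i. Im (x i) = 0}"
  shows "\<exists>f \<in> sos \<inter> invariants G. phi \<pi> z f < 0"
proof -
  have finG: "finite G" and idG: "mat 1 \<in> G" and invG: "\<And>g. g \<in> G \<Longrightarrow> invertible g \<and> matrix_inv g \<in> G"
    and mulG: "\<And>g h. g \<in> G \<Longrightarrow> h \<in> G \<Longrightarrow> g ** h \<in> G"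
    using assms(1) unfolding finite_matrix_group_def by auto
  obtain x where xfib: "\<And>k. eval_complex (\<pi> k) x = complex_of_real (z k)"
    and xnr: "\<exists>i. Im (x i) \<noteq> 0"
    using assms(4) unfolding hilbert_fibre_def by auto
  define cx where "cx = (\<lambda>i. cnj (x i))"
  have cxnr: "\<exists>i. Im (cx i) \<noteq> 0" using xnr by (auto simp: cx_def)
  define Om where "Om = (\<lambda>g. act g x) ` G \<union> (\<lambda>g. act g cx) ` G"
  have finOm: "finite Om" using finG by (simp add: Om_def)
  have nr: "\<exists>i. Im (y i) \<noteq> 0" if "y \<in> Om" for y
  proof -
    from that obtain g where gG: "g \<in> G" and "y = act g x \<or> y = act g cx"
      unfolding Om_def by blast
    then show ?thesis
      using act_nonreal[OF conjunct1[OF invG[OF gG]] xnr] act_nonreal[OF conjunct1[OF invG[OF gG]] cxnr]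
      by blast
  qed
  have cl: "(\<lambda>i. cnj (y i)) \<in> Om" if "y \<in> Om" for y
  proof -
    have "(\<lambda>i. cnj (act g cx i)) = act g x" for g
      by (simp add: act_cnj cx_def)
    moreover have "(\<lambda>i. cnj (act g x i)) = act g cx" for g
      by (simp add: act_cnj cx_def)
    ultimately show ?thesis using that unfolding Om_def by auto
  qed
  define jj where "jj y = (SOME j. Im (y j) \<noteq> 0)" for y :: "'n \<Rightarrow> complex"
  define t where "t y = \<i> * complex_of_real (if Im (y (jj y)) > 0 then 1 else -1)" for y
  have jjI: "Im (y (jj y)) \<noteq> 0" if "\<exists>i. Im (y i) \<noteq> 0" for y
    using that unfolding jj_def by (rule someI_ex)
  have jjc: "jj (\<lambda>i. cnj (y i)) = jj y" for y
    unfolding jj_def by simp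
  have tc: "t (\<lambda>i. cnj (y i)) = cnj (t y)" if "y \<in> Om" for y
    using jjI[OF nr[OF that]] unfolding t_def jjc
    by (cases "Im (y (jj y)) > 0") (simp_all add: complex_eq_iff)
  have tsq: "(t y) ^ 2 = -1" for y
    unfolding t_def by (cases "Im (y (jj y)) > 0") (simp_all add: power2_eq_square)
  obtain p :: "'n rpoly" where p: "\<And>y. y \<in> Om \<Longrightarrow> eval_complex p y = t y"
    using interp[of Om t, OF finOm cl tc] by blast
  define f where "f = (\<Sum>g\<in>G. (mat_act g p) ^ 2)"
  have fsos: "f \<in> sos"
  proof -
    obtain xs where xs: "distinct xs" "set xs = G" using finite_distinct_list[OF finG] by blast
    have "f = (\<Sum>q\<leftarrow>map (\<lambda>g. mat_act g p) xs. q ^ 2)"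
      unfolding f_def using xs by (simp add: o_def sum_list_distinct_conv_sum_set)
    then show ?thesis unfolding sos_def by blast
  qed
  have finv: "f \<in> invariants G"
    unfolding invariants_def
  proof (intro CollectI ballI)
    fix h assume hG: "h \<in> G"
    have "mat_act h f = (\<Sum>g\<in>G. (mat_act (g ** h) p) ^ 2)"
      unfolding f_def mat_act_hom mat_act_mat_act ..
    also have "\<dots> = f"
      unfolding f_def
    proof (rule sum.reindex_bij_witness[where i = "\<lambda>g. g ** matrix_inv h" and j = "\<lambda>g. g ** h"])
      fix g assume "g \<in> G"
      show "g ** h ** matrix_inv h = g"
        using invG[OF hG] by (simp add: minv flip: matrix_mul_assoc)
      show "g ** h \<in> G" using mulG hG \<open>g \<in> G\<close> by blast
      show "g ** matrix_inv h ** h = g"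
        using invG[OF hG] by (simp add: minv flip: matrix_mul_assoc)
      show "g ** matrix_inv h \<in> G" using mulG invG hG \<open>g \<in> G\<close> by blast
      show "(mat_act (g ** h) p)\<^sup>2 = (mat_act (g ** h) p)\<^sup>2" ..
    qed
    finally show "mat_act h f = f" .
  qed
  have evf: "eval_complex f x = - of_nat (card G)"
  proof -
    have "eval_complex f x = (\<Sum>g\<in>G. (eval_complex p (act g x)) ^ 2)"
      unfolding f_def evc_sumsq evc_mat_act ..
    also have "\<dots> = (\<Sum>g\<in>G. -1)"
      by (intro sum.cong refl) (simp add: p Om_def tsq)
    finally show ?thesis by simp
  qed
  obtain g0 where "psubst g0 \<pi> = f"
    using finv assms(2) unfolding generates_invariants_def by auto
  then have g1: "psubst (SOME g. psubst g \<pi> = f) \<pi> = f"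
    by (rule someI)
  have "complex_of_real (phi \<pi> z f) = eval_complex f x"
    unfolding phi_def cor_peval
    by (subst g1[symmetric], subst evc_psubst) (simp add: xfib)
  also have "\<dots> = complex_of_real (- real (card G))"
    using evf by simp
  finally have "phi \<pi> z f = - real (card G)"
    using of_real_eq_iff by blast
  moreover have "card G > 0" using finG idG card_gt_0_iff by blast
  ultimately have "phi \<pi> z f < 0" by simp
  then show ?thesis using fsos finv by blast
qed

end
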